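(* Let $k\ge 2$ be an integer and define distributions $\mathbf{p},\mathbf{q}$ on $[k]=\{1,\dots,k\}$ as follows. If $k$ is even: $\mathbf{p}_i=0$ for even $i$, $\mathbf{p}_i=\frac{1}{2^{k-1}}\binom{k}{i}$ for odd $i$; $\mathbf{q}_i=\frac{1}{2^{k-1}-1}\binom{k}{i}$ for even $i$, $\mathbf{q}_i=0$ for odd $i$. If $k$ is odd: $\mathbf{p}_i=\frac{1}{2^{k-1}-1}\binom{k}{i}$ for even $i$, $\mathbf{p}_i=0$ for odd $i$; $\mathbf{q}_i=0$ for even $i$, $\mathbf{q}_i=\frac{1}{2^{k-1}}\binom{k}{i}$ for odd $i$. Then: (1) $\mathbf{p}_k=0$ and $\mathbf{q}_k\ge \frac{1}{2^k}$; (2) for any random variables $X_A\sim\mathbf{p}$ and $X_B\sim\mathbf{q}$, $X_A$ and $X_B$ have $k-1$ proportional moments.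
   Context: Two random variables $X_1,X_2$ have $k-1$ proportional moments if $\frac{\mathbf{E}[X_2]}{\mathbf{E}[X_1]}=\frac{\mathbf{E}[X_2^2]}{\mathbf{E}[X_1^2]}=\cdots=\frac{\mathbf{E}[X_2^{k-1}]}{\mathbf{E}[X_1^{k-1}]}$. *)

theory Defs
  imports "HOL-Probability.Probability"
begin

definition pA :: "nat \<Rightarrow> nat \<Rightarrow> real" where
  "pA k i = (if i < 1 \<or> i > k then 0
             else if even k then (if even i then 0 else real (k choose i) / 2 ^ (k - 1))
             else (if even i then real (k choose i) / (2 ^ (k - 1) - 1) else 0))"

definition qB :: "nat \<Rightarrow> nat \<Rightarrow> real" where
  "qB k i = (if i < 1 \<or> i > k then 0
             else if even k then (if even i then real (k choose i) / (2 ^ (k - 1) - 1) else 0)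
             else (if even i then 0 else real (k choose i) / 2 ^ (k - 1)))"

definition proportional_moments ::
  "'a measure \<Rightarrow> ('a \<Rightarrow> real) \<Rightarrow> 'b measure \<Rightarrow> ('b \<Rightarrow> real) \<Rightarrow> nat \<Rightarrow> bool" where
  "proportional_moments M1 X1 M2 X2 m \<longleftrightarrow>
     (\<forall>j\<in>{1..m}. \<forall>l\<in>{1..m}.
        (\<integral>\<omega>. X2 \<omega> ^ j \<partial>M2) / (\<integral>\<omega>. X1 \<omega> ^ j \<partial>M1)
      = (\<integral>\<omega>. X2 \<omega> ^ l \<partial>M2) / (\<integral>\<omega>. X1 \<omega> ^ l \<partial>M1))"

end

theory Submission imports Defs begin
lemma alt_step:
  fixes f :: "nat \<Rightarrow> real"
  shows "(\<Sum>i\<le>Suc n. (-1)^i * real (Suc n choose i) * f i) =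
         (\<Sum>i\<le>n. (-1)^i * real (n choose i) * (f i - f (Suc i)))"
proof -
  have A: "(\<Sum>i\<le>Suc n. (-1)^i * real (Suc n choose i) * f i) =
     f 0 - (\<Sum>i\<le>n. (-1)^i * real (n choose i) * f (Suc i))
         - (\<Sum>i\<le>n. (-1)^i * real (n choose Suc i) * f (Suc i))"
    apply (simp only: sum.atMost_Suc_shift binomial_Suc_Suc of_nat_add ring_distribs sum.distrib)
    apply (simp add: sum_negf del: sum.atMost_Suc)
    done
  have B: "(\<Sum>i\<le>n. (-1)^i * real (n choose Suc i) * f (Suc i))
       = f 0 - (\<Sum>i\<le>Suc n. (-1)^i * real (n choose i) * f i)"
    by (simp add: sum.atMost_Suc_shift sum_negf del: sum.atMost_Suc)
  have C: "(\<Sum>i\<le>Suc n. (-1)^i * real (n choose i) * f i) = (\<Sum>i\<le>n. (-1)^i * real (n choose i) * f i)"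
    by simp
  have E: "(\<Sum>i\<le>n. (-1)^i * real (n choose i) * (f i - f (Suc i))) =
     (\<Sum>i\<le>n. (-1)^i * real (n choose i) * f i) - (\<Sum>i\<le>n. (-1)^i * real (n choose i) * f (Suc i))"
    by (simp add: right_diff_distrib sum_subtractf)
  show ?thesis using A B C E by linarith
qed
lemma alt_sum: "j < k \<Longrightarrow> (\<Sum>i\<le>k. (-1)^i * real (k choose i) * real i ^ j) = 0"
proof (induction k arbitrary: j)
  case 0 then show ?case by simp
next
  case (Suc n)
  have D: "real i ^ j - real (Suc i) ^ j = - (\<Sum>t<j. real (j choose t) * real i ^ t)" for i
  proof -
    have "real (Suc i) ^ j = (\<Sum>t\<le>j. real (j choose t) * real i ^ t)"
      using binomial_ring[of "real i" 1 j] by (simp add: algebra_simps)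
    also have "\<dots> = (\<Sum>t<j. real (j choose t) * real i ^ t) + real i ^ j"
      by (simp add: lessThan_Suc_atMost[symmetric])
    finally show ?thesis by simp
  qed
  have "(\<Sum>i\<le>Suc n. (-1)^i * real (Suc n choose i) * real i ^ j)
      = (\<Sum>i\<le>n. (-1)^i * real (n choose i) * (real i ^ j - real (Suc i) ^ j))"
    using alt_step[of n "\<lambda>i. real i ^ j"] by simp
  also have "\<dots> = - (\<Sum>i\<le>n. \<Sum>t<j. real (j choose t) * ((-1)^i * real (n choose i) * real i ^ t))"
  proof -
    have "(-1)^i * real (n choose i) * (real i ^ j - real (Suc i) ^ j) =
       - (\<Sum>t<j. real (j choose t) * ((-1)^i * real (n choose i) * real i ^ t))" for i
      unfolding D by (simp add: sum_distrib_left algebra_simps sum_negf)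
    then show ?thesis by (simp add: sum_negf)
  qed
  also have "\<dots> = - (\<Sum>t<j. real (j choose t) * (\<Sum>i\<le>n. (-1)^i * real (n choose i) * real i ^ t))"
    by (subst sum.swap) (simp add: sum_distrib_left)
  also have "\<dots> = 0"
    using Suc by (intro iffD2[OF neg_equal_0_iff_equal] sum.neutral) auto
  finally show ?case .
qed

lemma expect_fin:
  fixes M :: "'a measure" and X :: "'a \<Rightarrow> nat" and g :: "nat \<Rightarrow> real"
  assumes P: "prob_space M" and Xm: "X \<in> measurable M (count_space UNIV)"
    and D: "\<forall>i. measure M {\<omega> \<in> space M. X \<omega> = i} = f i"
    and S: "finite S" and Z: "\<And>i. i \<notin> S \<Longrightarrow> f i = 0"
  shows "(\<integral>\<omega>. g (X \<omega>) \<partial>M) = (\<Sum>i\<in>S. g i * f i)"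
proof -
  interpret prob_space M by fact
  have sets: "{\<omega> \<in> space M. X \<omega> = i} \<in> sets M" for i
  proof -
    have "{\<omega> \<in> space M. X \<omega> = i} = X -` {i} \<inter> space M" by auto
    thus ?thesis using measurable_sets[OF Xm, of "{i}"] by simp
  qed
  have null: "{\<omega> \<in> space M. X \<omega> = i} \<in> null_sets M" if "i \<notin> S" for i
    using sets[of i] D Z[OF that] by (simp add: null_sets_def emeasure_eq_measure)
  have "(\<Union>i\<in>-S. {\<omega> \<in> space M. X \<omega> = i}) \<in> null_sets M"
    by (rule null_sets_UN') (auto intro: null)
  moreover have "{\<omega> \<in> space M. X \<omega> \<notin> S} \<subseteq> (\<Union>i\<in>-S. {\<omega> \<in> space M. X \<omega> = i})" by auto
  ultimately have AE: "AE \<omega> in M. X \<omega> \<in> S"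
    by (intro AE_I'[of "(\<Union>i\<in>-S. {\<omega> \<in> space M. X \<omega> = i})"]) auto
  have "(\<integral>\<omega>. g (X \<omega>) \<partial>M) = (\<integral>\<omega>. (\<Sum>i\<in>S. g i * indicator {\<omega> \<in> space M. X \<omega> = i} \<omega>) \<partial>M)"
  proof (rule integral_cong_AE)
    show "(\<lambda>\<omega>. g (X \<omega>)) \<in> borel_measurable M"
      by (rule measurable_compose[OF Xm]) simp
    show "(\<lambda>\<omega>. \<Sum>i\<in>S. g i * indicator {\<omega> \<in> space M. X \<omega> = i} \<omega>) \<in> borel_measurable M"
      using sets by (intro borel_measurable_sum borel_measurable_times) auto
    show "AE \<omega> in M. g (X \<omega>) = (\<Sum>i\<in>S. g i * indicator {\<omega> \<in> space M. X \<omega> = i} \<omega>)"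
      using AE AE_space
    proof eventually_elim
      case (elim \<omega>)
      have "(\<Sum>i\<in>S. g i * indicator {\<omega> \<in> space M. X \<omega> = i} \<omega>) = (\<Sum>i\<in>S. if i = X \<omega> then g i else 0)"
        using elim by (intro sum.cong) (auto simp: indicator_def)
      also have "\<dots> = g (X \<omega>)" using elim S by simp
      finally show ?case by simp
    qed
  qed
  also have "\<dots> = (\<Sum>i\<in>S. g i * f i)"
  proof -
    have "integrable M (\<lambda>\<omega>. g i * indicator {\<omega> \<in> space M. X \<omega> = i} \<omega>)" for i
      using sets[of i] by (intro integrable_mult_right) (simp add: emeasure_eq_measure)
    then have "(\<integral>\<omega>. (\<Sum>i\<in>S. g i * indicator {\<omega> \<in> space M. X \<omega> = i} \<omega>) \<partial>M) = (\<Sum>i\<in>S. \<integral>\<omega>. g i * indicator {\<omega> \<in> space M. X \<omega> = i} \<omega> \<partial>M)"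
      by (rule Bochner_Integration.integral_sum[where I=S and f="\<lambda>i \<omega>. g i * indicator {\<omega> \<in> space M. X \<omega> = i} \<omega>"])
    also have "(\<Sum>i\<in>S. \<integral>\<omega>. g i * indicator {\<omega> \<in> space M. X \<omega> = i} \<omega> \<partial>M) = (\<Sum>i\<in>S. g i * f i)"
      using sets D by (intro sum.cong) simp_all
    finally show ?thesis .
  qed
  finally show ?thesis .
qed

theorem lemma3:
  fixes k :: nat
  assumes "k \<ge> 2"
  shows "(pA k k = 0 \<and> qB k k \<ge> 1 / 2 ^ k) \<and>
         (\<forall>(MA :: 'a measure) (XA :: 'a \<Rightarrow> nat) (MB :: 'b measure) (XB :: 'b \<Rightarrow> nat).
           prob_space MA \<longrightarrow> XA \<in> measurable MA (count_space UNIV) \<longrightarrow>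
           (\<forall>i. measure MA {\<omega> \<in> space MA. XA \<omega> = i} = pA k i) \<longrightarrow>
           prob_space MB \<longrightarrow> XB \<in> measurable MB (count_space UNIV) \<longrightarrow>
           (\<forall>i. measure MB {\<omega> \<in> space MB. XB \<omega> = i} = qB k i) \<longrightarrow>
           proportional_moments MA (\<lambda>\<omega>. real (XA \<omega>)) MB (\<lambda>\<omega>. real (XB \<omega>)) (k - 1))"
proof -
  have k1: "k - 1 \<ge> 1" using assms by simp
  have p2: "(2::real) ^ (k - 1) \<ge> 2"
    using power_increasing[OF k1, of "2::real"] by simp
  have p3: "(2::real) ^ k = 2 * 2 ^ (k - 1)"
    using assms by (metis Suc_diff_1 less_le_trans pos2 power_Suc zero_less_numeral)
  have part1: "pA k k = 0 \<and> qB k k \<ge> 1 / 2 ^ k"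
  proof (cases "even k")
    case True
    then have "qB k k = 1 / (2 ^ (k - 1) - 1)" using assms by (simp add: qB_def)
    moreover have "1 / (2::real) ^ k \<le> 1 / (2 ^ (k - 1) - 1)"
      using p2 p3 by (intro divide_left_mono) auto
    ultimately show ?thesis using True assms by (simp add: pA_def)
  next
    case False
    then have "qB k k = 1 / 2 ^ (k - 1)" using assms by (simp add: qB_def)
    moreover have "1 / (2::real) ^ k \<le> 1 / 2 ^ (k - 1)"
      using p2 p3 by (intro divide_left_mono) auto
    ultimately show ?thesis using False assms by (simp add: pA_def)
  qed
  define Od where "Od j = (\<Sum>i\<in>{1..k}. if odd i then real (k choose i) * real i ^ j else 0)" for j
  define Ev where "Ev j = (\<Sum>i\<in>{1..k}. if even i then real (k choose i) * real i ^ j else 0)" for j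
  have EvOd: "Ev j = Od j" if "1 \<le> j" "j \<le> k - 1" for j
  proof -
    have "j < k" using that assms by simp
    from alt_sum[OF this] have "(\<Sum>i\<in>insert 0 {1..k}. (-1)^i * real (k choose i) * real i ^ j) = 0"
      by (metis atLeast0AtMost atLeastAtMost_insertL le0 One_nat_def)
    then have "(\<Sum>i\<in>{1..k}. (-1)^i * real (k choose i) * real i ^ j) = 0"
      using that by (simp add: zero_power)
    moreover have "(\<Sum>i\<in>{1..k}. (-1)^i * real (k choose i) * real i ^ j) = Ev j - Od j"
      unfolding Ev_def Od_def sum_subtractf[symmetric] by (intro sum.cong) auto
    ultimately show ?thesis by simp
  qed
  have Odpos: "Od j > 0" for j
  proof -
    have "0 < (if odd (1::nat) then real (k choose 1) * real 1 ^ j else 0)" using assms by simp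
    also have "\<dots> \<le> Od j" unfolding Od_def
      by (rule member_le_sum) (use assms in auto)
    finally show ?thesis .
  qed
  define c where "c = (2::real) ^ (k - 1)"
  define d where "d = (2::real) ^ (k - 1) - 1"
  have cd: "c > 0" "d > 0" using p2 by (auto simp: c_def d_def)
  have EA: "(\<Sum>i\<in>{1..k}. real i ^ j * pA k i) = (if even k then Od j / c else Ev j / d)" for j
    by (cases "even k") (auto simp: Od_def Ev_def c_def d_def pA_def sum_divide_distrib intro!: sum.cong)
  have EB: "(\<Sum>i\<in>{1..k}. real i ^ j * qB k i) = (if even k then Ev j / d else Od j / c)" for j
    by (cases "even k") (auto simp: Od_def Ev_def c_def d_def qB_def sum_divide_distrib intro!: sum.cong)
  have part2: "proportional_moments MA (\<lambda>\<omega>. real (XA \<omega>)) MB (\<lambda>\<omega>. real (XB \<omega>)) (k - 1)"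
    if PA: "prob_space MA" and XA: "XA \<in> measurable MA (count_space UNIV)"
      and DA: "\<forall>i. measure MA {\<omega> \<in> space MA. XA \<omega> = i} = pA k i"
      and PB: "prob_space MB" and XB: "XB \<in> measurable MB (count_space UNIV)"
      and DB: "\<forall>i. measure MB {\<omega> \<in> space MB. XB \<omega> = i} = qB k i"
    for MA :: "'a measure" and XA :: "'a \<Rightarrow> nat" and MB :: "'b measure" and XB :: "'b \<Rightarrow> nat"
  proof -
    define a where "a = (if even k then 1 / c else 1 / d)"
    define b where "b = (if even k then 1 / d else 1 / c)"
    have IA: "(\<integral>\<omega>. real (XA \<omega>) ^ j \<partial>MA) = a * Od j" if "j \<in> {1..k-1}" for j
    proof -
      have "(\<integral>\<omega>. real (XA \<omega>) ^ j \<partial>MA) = (\<Sum>i\<in>{1..k}. real i ^ j * pA k i)"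
        by (rule expect_fin[OF PA XA DA, where g="\<lambda>i. real i ^ j"]) (auto simp: pA_def)
      then show ?thesis using EA[of j] EvOd[of j] that by (simp add: a_def)
    qed
    have IB: "(\<integral>\<omega>. real (XB \<omega>) ^ j \<partial>MB) = b * Od j" if "j \<in> {1..k-1}" for j
    proof -
      have "(\<integral>\<omega>. real (XB \<omega>) ^ j \<partial>MB) = (\<Sum>i\<in>{1..k}. real i ^ j * qB k i)"
        by (rule expect_fin[OF PB XB DB, where g="\<lambda>i. real i ^ j"]) (auto simp: qB_def)
      then show ?thesis using EB[of j] EvOd[of j] that by (simp add: b_def)
    qed
    have a0: "a \<noteq> 0" using cd by (simp add: a_def)
    have R: "(\<integral>\<omega>. real (XB \<omega>) ^ j \<partial>MB) / (\<integral>\<omega>. real (XA \<omega>) ^ j \<partial>MA) = b / a"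
      if "j \<in> {1..k-1}" for j
      using IA[OF that] IB[OF that] Odpos[of j] a0 by simp
    show ?thesis unfolding proportional_moments_def using R by simp
  qed
  show ?thesis using part1 part2 by blast
qed
end
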